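(* Let $X$ be a string of length $n$, let $k\ge 2$ be an integer, and let $b$ be the number of $k$-breaks in $X$. Then $\tfrac13 b \le \mathrm{BP}_k(X)\le b+3$.
   Context: For a string $Z$, $\mathrm{per}(Z)$ is its smallest period, i.e. the smallest $q\ge1$ with $Z[i]=Z[i+q]$ for all $0\le i<|Z|-q$. $Z$ is $q$-periodic if $\mathrm{per}(Z)\le q$. $X[i..j)$ denotes the substring $X[i]X[i+1]\cdots X[j-1]$. A position $i\in\{0,1,\dots,n-3k\}$ is a $k$-break in $X$ if $i$ is a multiple of $k$ and $\mathrm{per}(X[i..i+3k))>k$. The $k$-block periodicity $\mathrm{BP}_k(X)$ is the smallest $L$ such that $X=X_1\cdots X_L$ with every $X_\ell$ $k$-periodic. *)

theory Defs
  imports Main "HOL.Real"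
begin

definition substr :: "'a list \<Rightarrow> nat \<Rightarrow> nat \<Rightarrow> 'a list" where
  "substr X i j = take (j - i) (drop i X)"

definition is_period :: "'a list \<Rightarrow> nat \<Rightarrow> bool" where
  "is_period Z q \<longleftrightarrow> (\<forall>i. i + q < length Z \<longrightarrow> Z ! i = Z ! (i + q))"

definition per :: "'a list \<Rightarrow> nat" where
  "per Z = (LEAST q. 1 \<le> q \<and> is_period Z q)"

definition periodic :: "nat \<Rightarrow> 'a list \<Rightarrow> bool" where
  "periodic q Z \<longleftrightarrow> per Z \<le> q"

definition breaks :: "nat \<Rightarrow> 'a list \<Rightarrow> nat set" where
  "breaks k X = {i. i + 3 * k \<le> length X \<and> k dvd i \<and> per (substr X i (i + 3 * k)) > k}"

definition BP :: "nat \<Rightarrow> 'a list \<Rightarrow> nat" where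
  "BP k X = (LEAST L. \<exists>Xs. length Xs = L \<and> concat Xs = X \<and> (\<forall>Y\<in>set Xs. periodic k Y))"

end

theory Submission
  imports Defs
begin

lemma length_substr: "length (substr X a b) = min b (length X) - a"
  by (simp add: substr_def)

lemma nth_substr: "j < length (substr X a b) \<Longrightarrow> substr X a b ! j = X ! (a + j)"
  by (simp add: substr_def, subst nth_drop, auto)

lemma period_substr:
  "is_period (substr X a b) q \<longleftrightarrow> (\<forall>i. a \<le> i \<longrightarrow> i + q < min b (length X) \<longrightarrow> X ! i = X ! (i + q))"
proof
  assume H: "is_period (substr X a b) q"
  show "\<forall>i. a \<le> i \<longrightarrow> i + q < min b (length X) \<longrightarrow> X ! i = X ! (i + q)"
  proof (intro allI impI)
    fix i assume "a \<le> i" "i + q < min b (length X)"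
    then have "(i - a) + q < length (substr X a b)" by (simp add: length_substr less_diff_conv)
    then have "substr X a b ! (i - a) = substr X a b ! (i - a + q)"
      using H unfolding is_period_def by blast
    then show "X ! i = X ! (i + q)"
      using \<open>(i - a) + q < length (substr X a b)\<close> \<open>a \<le> i\<close> by (simp add: nth_substr)
  qed
next
  assume H: "\<forall>i. a \<le> i \<longrightarrow> i + q < min b (length X) \<longrightarrow> X ! i = X ! (i + q)"
  show "is_period (substr X a b) q"
    unfolding is_period_def
  proof (intro allI impI)
    fix j assume "j + q < length (substr X a b)"
    then have "a + j + q < min b (length X)" by (simp add: length_substr min_def split: if_splits)
    then have "X ! (a + j) = X ! (a + j + q)" using H by simp
    then show "substr X a b ! j = substr X a b ! (j + q)"
      using \<open>j + q < length (substr X a b)\<close> by (simp add: nth_substr add.assoc)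
  qed
qed

lemma per_props: "1 \<le> per Z \<and> is_period Z (per Z)"
proof -
  have "1 \<le> Suc (length Z) \<and> is_period Z (Suc (length Z))" by (simp add: is_period_def)
  then show ?thesis unfolding per_def by (rule LeastI)
qed

lemma per_le: "is_period Z q \<Longrightarrow> 1 \<le> q \<Longrightarrow> per Z \<le> q"
  unfolding per_def by (simp add: Least_le)

lemma periodic_short: "length Z \<le> k \<Longrightarrow> 1 \<le> k \<Longrightarrow> periodic k Z"
  unfolding periodic_def by (rule per_le) (auto simp: is_period_def)

lemma periodic_E:
  assumes "periodic k Z" obtains q where "1 \<le> q" "q \<le> k" "is_period Z q"
  using assms per_props unfolding periodic_def by blast

lemma periodic_I: "is_period Z q \<Longrightarrow> 1 \<le> q \<Longrightarrow> q \<le> k \<Longrightarrow> periodic k Z"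
  unfolding periodic_def using per_le by fastforce

lemma take_substr: "s \<le> e \<Longrightarrow> take s X @ substr X s e = take e X"
  unfolding substr_def by (metis le_add_diff_inverse take_add)

lemma periodic_substr_mono:
  assumes "periodic k (substr X a b)" "a \<le> a'" "b' \<le> b"
  shows "periodic k (substr X a' b')"
proof -
  obtain q where q: "1 \<le> q" "q \<le> k" "is_period (substr X a b) q" using assms(1) periodic_E by blast
  have "is_period (substr X a' b') q" using q(3) assms(2,3) unfolding period_substr by auto
  then show ?thesis using q periodic_I by blast
qed

lemma merge:
  assumes "s + 2*k \<le> e" "e + k \<le> length X"
    and P: "is_period (substr X s e) p" "1 \<le> p" "p \<le> k"
    and Q: "is_period (substr X (e - 2*k) (e + k)) q" "q \<le> k"
  shows "is_period (substr X s (e + k)) q"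
proof -
  have H1: "\<And>i. s \<le> i \<Longrightarrow> i + p < e \<Longrightarrow> X ! i = X ! (i + p)"
    using P(1) assms(2) unfolding period_substr by auto
  have H2: "\<And>i. e - 2*k \<le> i \<Longrightarrow> i + q < e + k \<Longrightarrow> X ! i = X ! (i + q)"
    using Q(1) assms(2) unfolding period_substr by auto
  have G: "\<And>i. s \<le> i \<Longrightarrow> i + q < e + k \<Longrightarrow> X ! i = X ! (i + q)"
  proof -
    fix i0 assume "s \<le> i0" "i0 + q < e + k"
    then show "X ! i0 = X ! (i0 + q)"
    proof (induction "e + k - i0" arbitrary: i0 rule: less_induct)
      case (less i)
      show ?case
      proof (cases "e - 2*k \<le> i")
        case True then show ?thesis using H2 less.prems by blast
      next
        case False
        then have lt: "i + p + q < e" using P Q assms(1) by linarith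
        have "X ! i = X ! (i + p)" using H1 less.prems lt by simp
        also have "\<dots> = X ! (i + p + q)"
          using less.hyps[of "i + p"] less.prems lt P(2) by simp
        also have "\<dots> = X ! (i + q)"
          using H1[of "i + q"] less.prems lt by (simp add: ac_simps)
        finally show ?thesis .
      qed
    qed
  qed
  show ?thesis unfolding period_substr using G by auto
qed


lemma substr_append1: "i + m \<le> length A \<Longrightarrow> substr (A @ Y) i (i + m) = substr A i (i + m)"
  by (simp add: substr_def)

lemma substr_append2: "length A \<le> i \<Longrightarrow> substr (A @ Y) i (i + m) = substr Y (i - length A) (i - length A + m)"
  by (simp add: substr_def)

lemma substr_whole: "substr Y 0 (length Y) = Y"
  by (simp add: substr_def)

lemma three_mults:
  assumes "1 \<le> k"
  shows "card {i::nat. k dvd i \<and> i < s \<and> s < i + 3*k} \<le> 3"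
proof -
  let ?a = "(s - 1) div k"
  have "{i::nat. k dvd i \<and> i < s \<and> s < i + 3*k} \<subseteq> (\<lambda>t. t*k) ` {?a - 2 .. ?a}"
  proof
    fix i assume "i \<in> {i::nat. k dvd i \<and> i < s \<and> s < i + 3*k}"
    then obtain t where t: "i = t*k" "t*k < s" "s < t*k + 3*k" by (auto elim!: dvdE simp: mult.commute)
    have "t*k \<le> s - 1" using t by linarith
    then have "t \<le> ?a" using assms
      by (metis div_le_mono nonzero_mult_div_cancel_right not_one_le_zero)
    moreover have "s - 1 < (t + 3) * k" using t by (simp add: algebra_simps)
    then have "?a < t + 3" using assms by (simp add: less_mult_imp_div_less)
    ultimately show "i \<in> (\<lambda>t. t*k) ` {?a - 2 .. ?a}" using t by auto
  qed
  then have "card {i::nat. k dvd i \<and> i < s \<and> s < i + 3*k} \<le> card ((\<lambda>t. t*k) ` {?a - 2 .. ?a})"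
    by (intro card_mono) auto
  also have "\<dots> \<le> card {?a - 2 .. ?a}" by (rule card_image_le) auto
  also have "\<dots> \<le> 3" by simp
  finally show ?thesis .
qed

lemma finite_breaks: "finite (breaks k X)"
  by (rule finite_subset[of _ "{..length X}"]) (auto simp: breaks_def)

lemma breaks_concat:
  assumes "1 \<le> k"
  shows "(\<forall>Y\<in>set Xs. periodic k Y) \<Longrightarrow> card (breaks k (concat Xs)) \<le> 3 * length Xs"
proof (induction Xs rule: rev_induct)
  case Nil
  then show ?case using assms by (simp add: breaks_def)
next
  case (snoc Y Xs)
  let ?A = "concat Xs"
  let ?s = "length ?A"
  have IH: "card (breaks k ?A) \<le> 3 * length Xs" using snoc by simp
  have PY: "periodic k Y" using snoc.prems by simp
  have sub: "breaks k (?A @ Y) \<subseteq> breaks k ?A \<union> {i. k dvd i \<and> i < ?s \<and> ?s < i + 3*k}"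
  proof
    fix i assume i: "i \<in> breaks k (?A @ Y)"
    then have i1: "i + 3*k \<le> length (?A @ Y)" "k dvd i" "per (substr (?A @ Y) i (i + 3*k)) > k"
      by (auto simp: breaks_def)
    consider "i + 3*k \<le> ?s" | "?s \<le> i" | "i < ?s \<and> ?s < i + 3*k" by linarith
    then show "i \<in> breaks k ?A \<union> {i. k dvd i \<and> i < ?s \<and> ?s < i + 3*k}"
    proof cases
      case 1
      then show ?thesis using i1 substr_append1[OF 1, of Y] by (auto simp: breaks_def)
    next
      case 2
      have "periodic k (substr Y (i - ?s) (i - ?s + 3*k))"
        using periodic_substr_mono[of k Y 0 "length Y"] PY i1(1) 2
        by (simp add: substr_whole)
      then have False using i1(3) substr_append2[OF 2, of Y "3*k"] by (simp add: periodic_def)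
      then show ?thesis ..
    next
      case 3 then show ?thesis using i1 by auto
    qed
  qed
  have "card (breaks k (?A @ Y)) \<le> card (breaks k ?A \<union> {i. k dvd i \<and> i < ?s \<and> ?s < i + 3*k})"
    by (rule card_mono[OF _ sub]) (auto simp: finite_breaks)
  also have "\<dots> \<le> card (breaks k ?A) + card {i. k dvd i \<and> i < ?s \<and> ?s < i + 3*k}"
    by (rule card_Un_le)
  also have "\<dots> \<le> 3 * length Xs + 3" using IH three_mults[OF assms, of ?s] by linarith
  finally show ?case by simp
qed


lemma bc_step:
  assumes "1 \<le> k"
  shows "breaks k X \<inter> {..<Suc m * k} = insert (m*k) (breaks k X \<inter> {..<m*k}) \<and> m*k \<in> breaks k X
      \<or> breaks k X \<inter> {..<Suc m * k} = breaks k X \<inter> {..<m*k} \<and> m*k \<notin> breaks k X"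
proof -
  have "breaks k X \<inter> {..<Suc m * k} = (breaks k X \<inter> {..<m*k}) \<union> (breaks k X \<inter> {m*k})"
  proof (intro equalityI subsetI)
    fix i assume i: "i \<in> breaks k X \<inter> {..<Suc m * k}"
    show "i \<in> (breaks k X \<inter> {..<m*k}) \<union> (breaks k X \<inter> {m*k})"
    proof (cases "i < m*k")
      case True then show ?thesis using i by auto
    next
      case False
      from i have "k dvd i" by (auto simp: breaks_def)
      then obtain c where c: "i = c*k" by (metis dvdE mult.commute)
      have "m \<le> c" using False c assms by (simp add: mult_le_cancel2 not_less)
      moreover have "c * k < Suc m * k" using i c by simp
      then have "c < Suc m" by (metis mult_less_cancel2)
      ultimately have "i = m*k" using c by simp
      then show ?thesis using i by auto
    qed
  next
    fix i assume "i \<in> (breaks k X \<inter> {..<m*k}) \<union> (breaks k X \<inter> {m*k})"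
    then show "i \<in> breaks k X \<inter> {..<Suc m * k}" using assms by auto
  qed
  then show ?thesis by auto
qed

lemma upper_inv:
  assumes k: "1 \<le> k"
  shows "m = 0 \<or> (m+2)*k \<le> length X \<Longrightarrow>
    (\<exists>Qs. concat Qs = take (m*k) X \<and> (\<forall>Y\<in>set Qs. periodic k Y) \<and> length Qs \<le> card (breaks k X \<inter> {..<m*k}))
   \<or> (\<exists>Ps s. concat Ps = take s X \<and> (\<forall>Y\<in>set Ps. periodic k Y) \<and> s + 2*k \<le> (m+2)*k \<and> (m+2)*k \<le> length X
        \<and> periodic k (substr X s ((m+2)*k)) \<and> length Ps \<le> card (breaks k X \<inter> {..<m*k}))"
proof (induction m)
  case 0
  then show ?case by (intro disjI1 exI[of _ "[]"]) simp
next
  case (Suc m)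
  then have len: "m*k + 3*k \<le> length X" by (simp add: algebra_simps)
  then have "m = 0 \<or> (m+2)*k \<le> length X" by (simp add: algebra_simps)
  note IH = Suc.IH[OF this]
  let ?w = "substr X (m*k) (m*k + 3*k)"
  have brk: "m*k \<in> breaks k X \<longleftrightarrow> per ?w > k" using len by (simp add: breaks_def)
  have fin: "finite (breaks k X \<inter> {..<m*k})" by simp
  have e1: "Suc m * k + 2*k = m*k + 3*k" by (simp add: algebra_simps)
  have e2: "(m+2)*k = m*k + 2*k" by (simp add: algebra_simps)
  have e3: "(Suc m + 2)*k = m*k + 3*k" by (simp add: algebra_simps)
  show ?case
  proof (cases "m*k \<in> breaks k X")
    case True
    then have bc: "card (breaks k X \<inter> {..<Suc m * k}) = Suc (card (breaks k X \<inter> {..<m*k}))"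
      using bc_step[OF k, of X m] fin by auto
    from IH show ?thesis
    proof
      assume "\<exists>Qs. concat Qs = take (m*k) X \<and> (\<forall>Y\<in>set Qs. periodic k Y) \<and> length Qs \<le> card (breaks k X \<inter> {..<m*k})"
      then obtain Qs where Q: "concat Qs = take (m*k) X" "\<forall>Y\<in>set Qs. periodic k Y" "length Qs \<le> card (breaks k X \<inter> {..<m*k})"
        by blast
      let ?N = "Qs @ [substr X (m*k) (Suc m * k)]"
      have "concat ?N = take (Suc m * k) X" using Q(1) take_substr[of "m*k" "Suc m * k" X] by simp
      moreover have "\<forall>Y\<in>set ?N. periodic k Y" using Q(2) k
        by (auto intro!: periodic_short simp: length_substr)
      moreover have "length ?N \<le> card (breaks k X \<inter> {..<Suc m * k})" using Q(3) bc by simp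
      ultimately show ?thesis by blast
    next
      assume "\<exists>Ps s. concat Ps = take s X \<and> (\<forall>Y\<in>set Ps. periodic k Y) \<and> s + 2*k \<le> (m+2)*k \<and> (m+2)*k \<le> length X
        \<and> periodic k (substr X s ((m+2)*k)) \<and> length Ps \<le> card (breaks k X \<inter> {..<m*k})"
      then obtain Ps s where P: "concat Ps = take s X" "\<forall>Y\<in>set Ps. periodic k Y" "s + 2*k \<le> (m+2)*k"
        "periodic k (substr X s ((m+2)*k))" "length Ps \<le> card (breaks k X \<inter> {..<m*k})" by blast
      let ?N = "Ps @ [substr X s (Suc m * k)]"
      have sle: "s \<le> Suc m * k" using P(3) by (simp add: algebra_simps)
      have "concat ?N = take (Suc m * k) X" using P(1) take_substr[OF sle, of X] by simp
      moreover have "\<forall>Y\<in>set ?N. periodic k Y" using P(2) periodic_substr_mono[OF P(4), of s "Suc m * k"]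
        by (auto simp: algebra_simps)
      moreover have "length ?N \<le> card (breaks k X \<inter> {..<Suc m * k})" using P(5) bc by simp
      ultimately show ?thesis by blast
    qed
  next
    case False
    then have bc: "card (breaks k X \<inter> {..<Suc m * k}) = card (breaks k X \<inter> {..<m*k})"
      using bc_step[OF k, of X m] by auto
    have pw: "periodic k ?w" using False brk by (simp add: periodic_def)
    have pw': "periodic k (substr X (m*k) (Suc m * k + 2*k))" using pw by (simp only: e1)
    from IH show ?thesis
    proof
      assume "\<exists>Qs. concat Qs = take (m*k) X \<and> (\<forall>Y\<in>set Qs. periodic k Y) \<and> length Qs \<le> card (breaks k X \<inter> {..<m*k})"
      then obtain Qs where Q: "concat Qs = take (m*k) X" "\<forall>Y\<in>set Qs. periodic k Y" "length Qs \<le> card (breaks k X \<inter> {..<m*k})"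
        by blast
      show ?thesis
        apply (rule disjI2)
        apply (rule exI[of _ Qs], rule exI[of _ "m*k"])
        unfolding e3 using Q bc pw len by simp
    next
      assume "\<exists>Ps s. concat Ps = take s X \<and> (\<forall>Y\<in>set Ps. periodic k Y) \<and> s + 2*k \<le> (m+2)*k \<and> (m+2)*k \<le> length X
        \<and> periodic k (substr X s ((m+2)*k)) \<and> length Ps \<le> card (breaks k X \<inter> {..<m*k})"
      then obtain Ps s where P: "concat Ps = take s X" "\<forall>Y\<in>set Ps. periodic k Y" "s + 2*k \<le> (m+2)*k"
        "periodic k (substr X s ((m+2)*k))" "length Ps \<le> card (breaks k X \<inter> {..<m*k})" by blast
      obtain p where p: "1 \<le> p" "p \<le> k" "is_period (substr X s ((m+2)*k)) p" using P(4) periodic_E by blast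
      obtain q where q: "1 \<le> q" "q \<le> k" "is_period ?w q" using pw periodic_E by blast
      have w': "?w = substr X ((m+2)*k - 2*k) ((m+2)*k + k)"
      proof -
        have a: "(m+2)*k - 2*k = m*k" "(m+2)*k + k = m*k + 3*k" by (simp_all add: algebra_simps)
        show ?thesis unfolding a ..
      qed
      have "is_period (substr X s ((m+2)*k + k)) q"
        using merge[OF P(3) _ p(3) p(1) p(2) _ q(2)] q(3) w' len by (simp add: algebra_simps)
      moreover have e4: "(m+2)*k + k = (Suc m + 2) * k" by (simp add: algebra_simps)
      ultimately have pp: "periodic k (substr X s ((Suc m + 2) * k))" using q periodic_I
        by metis
      have "s + 2*k \<le> (Suc m + 2)*k" using P(3) by (simp add: algebra_simps)
      then show ?thesis
        apply (intro disjI2 exI[of _ Ps] exI[of _ s])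
        using P(1,2,5) bc Suc.prems pp by simp
    qed
  qed
qed


lemma BP_ex: "1 \<le> k \<Longrightarrow> \<exists>Xs. length Xs = length X \<and> concat Xs = X \<and> (\<forall>Y\<in>set Xs. periodic k Y)"
  by (intro exI[of _ "map (\<lambda>x. [x]) X"]) (auto intro!: periodic_short)

lemma BP_le: "concat Xs = X \<Longrightarrow> \<forall>Y\<in>set Xs. periodic k Y \<Longrightarrow> BP k X \<le> length Xs"
  unfolding BP_def by (rule Least_le) blast

lemma BP_lower:
  assumes "1 \<le> k" shows "card (breaks k X) \<le> 3 * BP k X"
proof -
  have "\<exists>Xs. length Xs = BP k X \<and> concat Xs = X \<and> (\<forall>Y\<in>set Xs. periodic k Y)"
    unfolding BP_def by (rule LeastI_ex) (use BP_ex[OF assms] in blast)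
  then obtain Xs where "length Xs = BP k X" "concat Xs = X" "\<forall>Y\<in>set Xs. periodic k Y" by blast
  then show ?thesis using breaks_concat[OF assms, of Xs] by simp
qed

lemma BP_upper:
  assumes k: "1 \<le> k" shows "BP k X \<le> card (breaks k X) + 3"
proof -
  define n where "n = length X"
  define M where "M = (if 3*k \<le> n then n div k - 2 else 0)"
  have dm: "n div k * k + n mod k = n" by simp
  have mk: "n mod k < k" using k by simp
  have valid: "M = 0 \<or> (M+2)*k \<le> length X"
  proof (cases "3*k \<le> n")
    case True
    have "3 \<le> n div k" using True k
      by (metis div_le_mono nonzero_mult_div_cancel_right not_one_le_zero)
    then have "M+2 = n div k" using True by (simp add: M_def)
    then have "(M+2)*k = n div k * k" by simp
    then show ?thesis using dm n_def by linarith
  qed (simp add: M_def)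
  have allb: "breaks k X \<inter> {..<M*k} = breaks k X"
  proof -
    have "i < M*k" if "i \<in> breaks k X" for i
    proof -
      have i3: "i + 3*k \<le> n" using that by (simp add: breaks_def n_def)
      then have T: "3*k \<le> n" by simp
      have "3 \<le> n div k" using T k
        by (metis div_le_mono nonzero_mult_div_cancel_right not_one_le_zero)
      then have "M+2 = n div k" using T by (simp add: M_def)
    then have "(M+2)*k = n div k * k" by simp
      moreover have "(M+2)*k = M*k + 2*k" by (simp add: algebra_simps)
      ultimately have "M*k + 2*k + k > n" using dm mk by linarith
      then show ?thesis using i3 by linarith
    qed
    then show ?thesis by blast
  qed
  have rest: "n - M*k < 3*k" "M = 0 \<or> (M+2)*k \<le> n \<Longrightarrow> n - (M+2)*k < k"
  proof -
    have "n - M*k < 3*k \<and> n - (M+2)*k < k"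
    proof (cases "3*k \<le> n")
      case True
      have "3 \<le> n div k" using True k
        by (metis div_le_mono nonzero_mult_div_cancel_right not_one_le_zero)
      then have "M+2 = n div k" using True by (simp add: M_def)
    then have "(M+2)*k = n div k * k" by simp
      moreover have "(M+2)*k = M*k + 2*k" by (simp add: algebra_simps)
      ultimately show ?thesis using dm mk by linarith
    next
      case False then show ?thesis by (simp add: M_def)
    qed
    then show "n - M*k < 3*k" "M = 0 \<or> (M+2)*k \<le> n \<Longrightarrow> n - (M+2)*k < k" by auto
  qed
  from upper_inv[OF k valid] show ?thesis
  proof
    assume "\<exists>Qs. concat Qs = take (M*k) X \<and> (\<forall>Y\<in>set Qs. periodic k Y) \<and> length Qs \<le> card (breaks k X \<inter> {..<M*k})"
    then obtain Qs where Q: "concat Qs = take (M*k) X" "\<forall>Y\<in>set Qs. periodic k Y" "length Qs \<le> card (breaks k X)"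
      using allb by auto
    define D where "D = drop (M*k) X"
    have lD: "length D < 3*k" using rest(1) by (simp add: D_def n_def)
    let ?N = "Qs @ [take k D, take k (drop k D), drop (2*k) D]"
    have "concat ?N = take (M*k) X @ (take k D @ take k (drop k D) @ drop k (drop k D))"
      using Q(1) by (simp add: mult_2)
    also have "\<dots> = take (M*k) X @ D" by (simp only: append_take_drop_id)
    also have "\<dots> = X" by (simp only: D_def append_take_drop_id)
    finally have "concat ?N = X" .
    moreover have "\<forall>Y\<in>set ?N. periodic k Y" using Q(2) lD k by (auto intro!: periodic_short)
    ultimately have "BP k X \<le> length ?N" by (rule BP_le)
    then show ?thesis using Q(3) by simp
  next
    assume "\<exists>Ps s. concat Ps = take s X \<and> (\<forall>Y\<in>set Ps. periodic k Y) \<and> s + 2*k \<le> (M+2)*k \<and> (M+2)*k \<le> length X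
        \<and> periodic k (substr X s ((M+2)*k)) \<and> length Ps \<le> card (breaks k X \<inter> {..<M*k})"
    then obtain Ps s where P: "concat Ps = take s X" "\<forall>Y\<in>set Ps. periodic k Y" "s + 2*k \<le> (M+2)*k"
        "(M+2)*k \<le> length X" "periodic k (substr X s ((M+2)*k))" "length Ps \<le> card (breaks k X)"
      using allb by auto
    let ?N = "Ps @ [substr X s ((M+2)*k), drop ((M+2)*k) X]"
    have "concat ?N = (take s X @ substr X s ((M+2)*k)) @ drop ((M+2)*k) X" using P(1) by simp
    also have "\<dots> = X" using take_substr[of s "(M+2)*k" X] P(3) by simp
    finally have "concat ?N = X" .
    moreover have "\<forall>Y\<in>set ?N. periodic k Y" using P(2,4,5) rest(2) k by (auto intro!: periodic_short simp: n_def)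
    ultimately have "BP k X \<le> length ?N" by (rule BP_le)
    then show ?thesis using P(6) by simp
  qed
qed

theorem lemma3p3:
  fixes X :: "'a list" and k :: nat
  assumes "k \<ge> 2"
  shows "real (card (breaks k X)) / 3 \<le> real (BP k X) \<and> BP k X \<le> card (breaks k X) + 3"
proof -
  have k: "1 \<le> k" using assms by simp
  have "real (card (breaks k X)) \<le> 3 * real (BP k X)" using BP_lower[OF k, of X] by linarith
  then show ?thesis using BP_upper[OF k, of X] by simp
qed

end
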